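(* Let $A=[a_{ij}]$ be an $n\times n$ real matrix and suppose that $Av=\lambda v$ for some real number $\lambda$ and some real vector $v=(v_1,\dots,v_n)^T$ with $v_i\neq 0$ for all $i$. Let $S=\mathrm{diag}(v)$ and $B=S^{-1}AS$. If $\lambda_2$ is an eigenvalue of $A$ different from $\lambda$, then $\lambda_2$ lies in the Gershgorin region of the second type of $B^T$.
   Context: For a real $n\times n$ matrix $M=[m_{ij}]$ and an index $j$, let $y_1\ge y_2\ge\dots\ge y_n$ be the non-increasing rearrangement of the $n$ numbers $m_{1j},\dots,m_{j-1,j},0,m_{j+1,j},\dots,m_{nj}$ (the $j$-th column of $M$ with its diagonal entry replaced by $0$). Define $\hat r_j=\sum_{t=1}^{(n-1)/2}y_t-\sum_{t=(n+3)/2}^{n}y_t$ if $n$ is odd, and $\hat r_j=\sum_{t=1}^{n/2}y_t-\sum_{t=n/2+1}^{n}y_t$ if $n$ is even. The Gershgorin disc of the second type of $M^T$ associated with index $j$ is the closed disc $\{z\in\mathbb{C}:|z-m_{jj}|\le \hat r_j\}$, and the Gershgorin region of the second type of $M^T$ is the union of these $n$ discs. *)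

theory Defs
  imports "Jordan_Normal_Form.Char_Poly"
begin

definition gersh2_sorted_col :: "real mat \<Rightarrow> nat \<Rightarrow> real list" where
  "gersh2_sorted_col M j =
     rev (sort (map (\<lambda>i. if i = j then 0 else M $$ (i, j)) [0..<dim_row M]))"

text \<open>The radius r-hat j (positions 1..(n-1)/2 minus positions (n+3)/2..n if n odd;
  positions 1..n/2 minus positions n/2+1..n if n even; 1-based in the paper).\<close>
definition gersh2_radius :: "real mat \<Rightarrow> nat \<Rightarrow> real" where
  "gersh2_radius M j =
     (let n = dim_row M; ys = gersh2_sorted_col M j in
      if odd n then sum_list (take ((n - 1) div 2) ys) - sum_list (drop ((n + 1) div 2) ys)
      else sum_list (take (n div 2) ys) - sum_list (drop (n div 2) ys))"

definition gersh2_region_transpose :: "real mat \<Rightarrow> complex set" where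
  "gersh2_region_transpose M =
     (\<Union>j\<in>{0..<dim_row M}. {z. cmod (z - complex_of_real (M $$ (j, j))) \<le> gersh2_radius M j})"

end

theory Submission
  imports Defs
begin

lemma abs_split_sum:
  fixes ys :: "real list"
  assumes "\<forall>y\<in>set (take k ys). c \<le> y" "\<forall>y\<in>set (drop k ys). y \<le> c"
  shows "sum_list (map (\<lambda>y. \<bar>y - c\<bar>) ys) =
     (sum_list (take k ys) - real (length (take k ys)) * c) + (real (length (drop k ys)) * c - sum_list (drop k ys))"
proof -
  have "sum_list (map (\<lambda>y. \<bar>y - c\<bar>) ys) = sum_list (map (\<lambda>y. \<bar>y - c\<bar>) (take k ys)) + sum_list (map (\<lambda>y. \<bar>y - c\<bar>) (drop k ys))"
    by (metis append_take_drop_id map_append sum_list_append)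
  also have "sum_list (map (\<lambda>y. \<bar>y - c\<bar>) (take k ys)) = sum_list (map (\<lambda>y. y - c) (take k ys))"
    by (rule arg_cong[where f=sum_list], rule map_cong, insert assms(1), auto)
  also have "sum_list (map (\<lambda>y. \<bar>y - c\<bar>) (drop k ys)) = sum_list (map (\<lambda>y. c - y) (drop k ys))"
    by (rule arg_cong[where f=sum_list], rule map_cong, insert assms(2), auto)
  finally show ?thesis by (simp add: sum_list_subtractf sum_list_triv)
qed

lemma median_exists:
  fixes ys :: "real list"
  assumes s: "sorted (rev ys)" and n: "length ys = n" "n > 0"
  shows "\<exists>c. sum_list (map (\<lambda>y. \<bar>y - c\<bar>) ys) =
     (if odd n then sum_list (take ((n - 1) div 2) ys) - sum_list (drop ((n + 1) div 2) ys)
      else sum_list (take (n div 2) ys) - sum_list (drop (n div 2) ys))"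
proof -
  let ?m = "n div 2"
  let ?c = "ys ! ?m"
  have mn: "?m < n" using n by auto
  have t: "\<forall>y\<in>set (take ?m ys). ?c \<le> y"
  proof
    fix y assume "y \<in> set (take ?m ys)"
    then obtain i where "i < length (take ?m ys)" "y = take ?m ys ! i" by (metis in_set_conv_nth)
    then show "?c \<le> y" using sorted_rev_nth_mono[OF s, of i ?m] mn n by auto
  qed
  have d: "\<forall>y\<in>set (drop ?m ys). y \<le> ?c"
  proof
    fix y assume "y \<in> set (drop ?m ys)"
    then obtain i where "i < length (drop ?m ys)" "y = drop ?m ys ! i" by (metis in_set_conv_nth)
    then show "y \<le> ?c" using sorted_rev_nth_mono[OF s, of ?m "?m + i"] mn n by auto
  qed
  note eq = abs_split_sum[OF t d]
  show ?thesis
  proof (cases "odd n")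
    case True
    have e1: "(n - 1) div 2 = ?m" "(n + 1) div 2 = Suc ?m" using True by presburger+
    have "drop ?m ys = ?c # drop (Suc ?m) ys" using mn n by (simp add: Cons_nth_drop_Suc)
    hence "sum_list (drop ?m ys) = ?c + sum_list (drop (Suc ?m) ys)" by simp
    moreover have "n - ?m = Suc ?m" using True by presburger
    hence "length (drop ?m ys) = Suc (length (take ?m ys))" using n mn by auto
    ultimately show ?thesis using eq True e1 by (intro exI[of _ ?c]) (simp add: algebra_simps)
  next
    case False
    have "length (drop ?m ys) = length (take ?m ys)" using False n mn by auto
    then show ?thesis using eq False by (intro exI[of _ ?c]) (simp add: algebra_simps)
  qed
qed
theorem theorem3:
  fixes A :: "real mat" and v :: "real vec" and lam :: real and lam2 :: complex
    and S Sinv :: "real mat" and n :: nat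
  assumes A: "A \<in> carrier_mat n n"
    and v: "v \<in> carrier_vec n"
    and v_nz: "\<forall>i<n. v $ i \<noteq> 0"
    and eig: "A *\<^sub>v v = lam \<cdot>\<^sub>v v"
    and S_def: "S = mat n n (\<lambda>(i, j). if i = j then v $ i else 0)"
    and Sinv: "Sinv \<in> carrier_mat n n" "inverts_mat S Sinv" "inverts_mat Sinv S"
    and lam2: "eigenvalue (map_mat complex_of_real A) lam2"
    and ne: "lam2 \<noteq> complex_of_real lam"
  shows "lam2 \<in> gersh2_region_transpose (Sinv * A * S)"
proof -
  define a where "a i j = A $$ (i, j)" for i j
  define b where "b i j = a i j * v $ j / v $ i" for i j
  have S: "S \<in> carrier_mat n n" using S_def by auto
  have SS: "S * Sinv = 1\<^sub>m n" using Sinv(2) S unfolding inverts_mat_def by auto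
  have Sinv_ent: "Sinv $$ (i, k) = (if i = k then 1 / v $ i else 0)" if "i < n" "k < n" for i k
  proof -
    have "(S * Sinv) $$ (i, k) = (\<Sum>l\<in>{0..<n}. S $$ (i, l) * Sinv $$ (l, k))"
      using that S Sinv(1) by (auto simp: scalar_prod_def)
    also have "\<dots> = (\<Sum>l\<in>{0..<n}. if l = i then v $ i * Sinv $$ (i, k) else 0)"
      by (rule sum.cong, auto simp: S_def that)
    also have "\<dots> = v $ i * Sinv $$ (i, k)" using that by simp
    finally show ?thesis using SS that v_nz by (auto simp: field_simps)
  qed
  have AS_ent: "(A * S) $$ (i, j) = a i j * v $ j" if "i < n" "j < n" for i j
  proof -
    have "(A * S) $$ (i, j) = (\<Sum>l\<in>{0..<n}. A $$ (i, l) * S $$ (l, j))"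
      using that S A by (auto simp: scalar_prod_def)
    also have "\<dots> = (\<Sum>l\<in>{0..<n}. if l = j then a i j * v $ j else 0)"
      by (rule sum.cong, auto simp: S_def that a_def)
    finally show ?thesis using that by simp
  qed
  have B: "Sinv * A * S \<in> carrier_mat n n" using Sinv(1) A S by auto
  have B_ent: "(Sinv * A * S) $$ (i, j) = b i j" if "i < n" "j < n" for i j
  proof -
    have "Sinv * A * S = Sinv * (A * S)" using Sinv(1) A S by (simp add: assoc_mult_mat)
    hence "(Sinv * A * S) $$ (i, j) = (\<Sum>l\<in>{0..<n}. Sinv $$ (i, l) * (A * S) $$ (l, j))"
      using that S A Sinv(1) by (auto simp: scalar_prod_def)
    also have "\<dots> = (\<Sum>l\<in>{0..<n}. if l = i then a i j * v $ j / v $ i else 0)"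
      by (rule sum.cong, auto simp: Sinv_ent AS_ent that)
    finally show ?thesis using that by (simp add: b_def)
  qed
  have rowsum: "(\<Sum>j\<in>{0..<n}. b i j) = lam" if "i < n" for i
  proof -
    have "(A *\<^sub>v v) $ i = (\<Sum>j\<in>{0..<n}. a i j * v $ j)"
      using that A v by (auto simp: scalar_prod_def a_def)
    hence "(\<Sum>j\<in>{0..<n}. a i j * v $ j) = lam * v $ i" using eig that v by simp
    hence "(\<Sum>j\<in>{0..<n}. a i j * v $ j) / v $ i = lam" using v_nz that by simp
    thus ?thesis unfolding b_def by (simp add: sum_divide_distrib)
  qed
  let ?Ac = "map_mat complex_of_real A"
  have Ac: "?Ac \<in> carrier_mat n n" using A by auto
  have "eigenvalue (transpose_mat ?Ac) lam2"
    using lam2 eigenvalue_root_char_poly[OF Ac] eigenvalue_root_char_poly[of "transpose_mat ?Ac" n]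
      char_poly_transpose_mat[OF Ac] Ac by auto
  then obtain u where u: "u \<in> carrier_vec n" "u \<noteq> 0\<^sub>v n" "transpose_mat ?Ac *\<^sub>v u = lam2 \<cdot>\<^sub>v u"
    unfolding eigenvalue_def eigenvector_def using Ac by auto
  have left: "(\<Sum>i\<in>{0..<n}. u $ i * of_real (a i j)) = lam2 * u $ j" if "j < n" for j
  proof -
    have "(transpose_mat ?Ac *\<^sub>v u) $ j = (\<Sum>i\<in>{0..<n}. u $ i * of_real (a i j))"
      using that A u(1) by (auto simp: scalar_prod_def a_def mult.commute)
    thus ?thesis using u(3) that u(1) by simp
  qed
  define w where "w i = u $ i * of_real (v $ i)" for i
  have wleft: "(\<Sum>i\<in>{0..<n}. w i * of_real (b i j)) = lam2 * w j" if "j < n" for j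
  proof -
    have "(\<Sum>i\<in>{0..<n}. w i * of_real (b i j)) = (\<Sum>i\<in>{0..<n}. u $ i * of_real (a i j)) * of_real (v $ j)"
      unfolding sum_distrib_right
      by (rule sum.cong, auto simp: w_def b_def v_nz)
    thus ?thesis using left[OF that] by (simp add: w_def)
  qed
  have wsum: "(\<Sum>i\<in>{0..<n}. w i) = 0"
  proof -
    have "lam2 * (\<Sum>j\<in>{0..<n}. w j) = (\<Sum>j\<in>{0..<n}. \<Sum>i\<in>{0..<n}. w i * of_real (b i j))"
      by (simp add: sum_distrib_left wleft)
    also have "\<dots> = (\<Sum>i\<in>{0..<n}. w i * of_real (\<Sum>j\<in>{0..<n}. b i j))"
      by (subst sum.swap) (simp add: sum_distrib_left)
    also have "\<dots> = of_real lam * (\<Sum>i\<in>{0..<n}. w i)"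
      by (simp add: rowsum sum_distrib_left mult.commute)
    finally have "(lam2 - of_real lam) * (\<Sum>j\<in>{0..<n}. w j) = 0" by (simp add: algebra_simps)
    thus ?thesis using ne by simp
  qed
  have "n > 0" using u(1,2) by (metis carrier_vecD gr_zeroI vec_of_dim_0 zero_carrier_vec)
  have wnz: "\<exists>i<n. w i \<noteq> 0"
  proof (rule ccontr)
    assume "\<not> ?thesis"
    hence "u $ i = 0" if "i < n" for i using that v_nz by (auto simp: w_def)
    hence "u = 0\<^sub>v n" using u(1) by (intro eq_vecI) auto
    thus False using u(2) by simp
  qed
  obtain j where j: "j < n" "\<forall>i<n. cmod (w i) \<le> cmod (w j)"
  proof -
    have "finite ((\<lambda>i. cmod (w i)) ` {0..<n})" "(\<lambda>i. cmod (w i)) ` {0..<n} \<noteq> {}" using \<open>n > 0\<close> by auto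
    from Max_in[OF this] obtain j where "j < n" "cmod (w j) = Max ((\<lambda>i. cmod (w i)) ` {0..<n})" by auto
    moreover have "cmod (w i) \<le> Max ((\<lambda>i. cmod (w i)) ` {0..<n})" if "i < n" for i
      by (rule Max_ge) (use that in auto)
    ultimately show ?thesis using that by auto
  qed
  have wj: "cmod (w j) > 0" using wnz j by force
  define y where "y i = (if i = j then 0 else b i j)" for i
  define M where "M = Sinv * A * S"
  have dimM: "dim_row M = n" using B M_def by auto
  define ys where "ys = gersh2_sorted_col M j"
  have ys_def2: "ys = rev (sort (map y [0..<n]))"
    unfolding ys_def gersh2_sorted_col_def dimM
    by (intro arg_cong[where f="\<lambda>x. rev (sort x)"] map_cong) (use j in \<open>auto simp: y_def M_def B_ent\<close>)
  have sorted: "sorted (rev ys)" and len: "length ys = n" unfolding ys_def2 by auto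
  obtain c where c: "sum_list (map (\<lambda>y. \<bar>y - c\<bar>) ys) = gersh2_radius M j"
    using median_exists[OF sorted len \<open>n > 0\<close>] unfolding gersh2_radius_def Let_def dimM ys_def by auto
  have sumys: "sum_list (map (\<lambda>y. \<bar>y - c\<bar>) ys) = (\<Sum>i\<in>{0..<n}. \<bar>y i - c\<bar>)"
  proof -
    have "sum_list (map (\<lambda>y. \<bar>y - c\<bar>) ys) = sum_mset (image_mset (\<lambda>y. \<bar>y - c\<bar>) (mset ys))"
      by (subst sum_mset_sum_list[symmetric]) simp
    also have "mset ys = mset (map y [0..<n])" unfolding ys_def2 by simp
    also have "sum_mset (image_mset (\<lambda>y. \<bar>y - c\<bar>) (mset (map y [0..<n]))) = sum_list (map (\<lambda>i. \<bar>y i - c\<bar>) [0..<n])"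
      by (subst sum_mset_sum_list[symmetric]) (simp add: multiset.map_comp comp_def)
    also have "\<dots> = (\<Sum>i\<in>{0..<n}. \<bar>y i - c\<bar>)" by (simp add: interv_sum_list_conv_sum_set_nat)
    finally show ?thesis .
  qed
  have key: "(lam2 - of_real (b j j)) * w j = (\<Sum>i\<in>{0..<n}. w i * of_real (y i - c))"
  proof -
    have "(\<Sum>i\<in>{0..<n}. w i * of_real (b i j)) = (\<Sum>i\<in>{0..<n}. w i * of_real (y i) + (if i = j then w j * of_real (b j j) else 0))"
      by (rule sum.cong) (auto simp: y_def)
    also have "\<dots> = (\<Sum>i\<in>{0..<n}. w i * of_real (y i)) + w j * of_real (b j j)"
      using j by (simp add: sum.distrib)
    finally have 1: "(\<Sum>i\<in>{0..<n}. w i * of_real (y i)) = lam2 * w j - w j * of_real (b j j)"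
      using wleft[OF j(1)] by simp
    have "(\<Sum>i\<in>{0..<n}. w i * of_real (y i - c)) = (\<Sum>i\<in>{0..<n}. w i * of_real (y i)) - of_real c * (\<Sum>i\<in>{0..<n}. w i)"
      by (simp add: algebra_simps sum_subtractf sum_distrib_left)
    thus ?thesis using 1 wsum by (simp add: algebra_simps)
  qed
  have "cmod (lam2 - of_real (b j j)) * cmod (w j) = cmod ((lam2 - of_real (b j j)) * w j)"
    by (simp only: norm_mult)
  also have "\<dots> = cmod (\<Sum>i\<in>{0..<n}. w i * of_real (y i - c))" by (simp only: key)
  also have "\<dots> \<le> (\<Sum>i\<in>{0..<n}. cmod (w i * of_real (y i - c)))" by (rule norm_sum)
  also have "\<dots> = (\<Sum>i\<in>{0..<n}. cmod (w i) * \<bar>y i - c\<bar>)" by (simp only: norm_mult norm_of_real)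
  also have "\<dots> \<le> (\<Sum>i\<in>{0..<n}. cmod (w j) * \<bar>y i - c\<bar>)"
    using j by (intro sum_mono mult_right_mono) auto
  also have "\<dots> = cmod (w j) * gersh2_radius M j" using c sumys by (simp add: sum_distrib_left[symmetric])
  finally have "cmod (lam2 - of_real (b j j)) \<le> gersh2_radius M j" using wj by (simp add: mult.commute)
  moreover have "M $$ (j, j) = b j j" using j B_ent M_def by auto
  ultimately show ?thesis unfolding gersh2_region_transpose_def M_def[symmetric] dimM using j by (intro UN_I[of j]) auto
  qed
end
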